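(* Let $\mathcal{M}=\langle \mathcal{S}, (\mathcal{A}_s)_{s\in\mathcal{S}}, P, p_0, q\rangle$ be a Markov Decision Process with finite state space $\mathcal{S}$, finite action sets $\mathcal{A}_s$, transition kernel $P(\cdot\mid s,a)$ and expected rewards $r(s,a)$ satisfying $|r(s,a)|\le R$ for all $(s,a)$, and let $\gamma\in(0,1)$ be the discount factor. Let $d$ be a distance on $\mathcal{S}$, let $\varepsilon\ge 0$, and for $s\in\mathcal{S}$ let $\mathcal{A}_s^\varepsilon=\{\bar s\in\mathcal{S}: d(s,\bar s)\le\varepsilon\}$. Let $\pi$ be a (possibly randomized) policy for $\mathcal{M}$ and let $\chi:\mathcal{S}\to\mathcal{S}$ be any attack satisfying $\chi(s)\in\mathcal{A}_s^\varepsilon$ for all $s$; denote by $\pi\circ\chi$ the policy $\pi\circ\chi(\cdot\mid s)=\pi(\cdot\mid \chi(s))$. For $s\in\mathcal{S}$ define $$\alpha_{\pi,\varepsilon}(s)=\max_{\bar s\in\mathcal{A}_s^\varepsilon}\|\pi(\cdot\mid s)-\pi(\cdot\mid\bar s)\|_{TV}.$$ Then $$\|V^\pi-V^{\pi\circ\chi}\|_\infty\le \frac{2\|\alpha_{\pi,\varepsilon}\|_\infty}{1-\gamma}\left(R+\gamma\|V^\pi\|_\infty\right).$$ Moreover, if $\pi$ satisfies, for some $L\ge 0$, $\|\pi(\cdot\mid s)-\pi(\cdot\mid s')\|_{TV}\le L\, d(s,s')$ for all $s,s'\in\mathcal{S}$, then $$\|V^\pi-V^{\pi\circ\chi}\|_\infty\le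 \frac{2L\varepsilon}{1-\gamma}\left(R+\gamma\|V^\pi\|_\infty\right).$$
   Context: A policy $\pi$ maps each state $s$ to a probability distribution $\pi(\cdot\mid s)$ over $\mathcal{A}_s$. The value function of a policy $\pi$ is $V^\pi(s)=\mathbb{E}\big[\sum_{t\ge0}\gamma^t r(s_t^\pi,a_t^\pi)\big]$ where $s_0=s$, $a_t^\pi\sim\pi(\cdot\mid s_t^\pi)$ and $s_{t+1}^\pi\sim P(\cdot\mid s_t^\pi,a_t^\pi)$; equivalently $V^\pi$ is the unique solution of $V^\pi(s)=\mathbb{E}_{a\sim\pi(\cdot\mid s)}\big[r(s,a)+\gamma\,\mathbb{E}_{s'\sim P(\cdot\mid s,a)}V^\pi(s')\big]$. For $V\in\mathbb{R}^{\mathcal{S}}$, $\|V\|_\infty=\max_{s\in\mathcal{S}}|V(s)|$; for $\alpha:\mathcal{S}\to\mathbb{R}$, $\|\alpha\|_\infty=\max_s|\alpha(s)|$. The total variation distance between distributions $f_1,f_2$ on a finite set $K$ is $\|f_1-f_2\|_{TV}=\tfrac12\sum_{x\in K}|f_1(x)-f_2(x)|$. *)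

theory Defs
  imports Complex_Main
begin

text \<open>Finite MDP with finite state type 's and a common finite action type 'a.
  A distribution on a finite type is a nonnegative function summing to 1.\<close>

definition is_dist :: "('x::finite \<Rightarrow> real) \<Rightarrow> bool" where
  "is_dist f \<longleftrightarrow> (\<forall>x. 0 \<le> f x) \<and> (\<Sum>x\<in>UNIV. f x) = 1"

definition is_policy :: "('s::finite \<Rightarrow> 'a::finite \<Rightarrow> real) \<Rightarrow> bool" where
  "is_policy \<pi> \<longleftrightarrow> (\<forall>s. is_dist (\<pi> s))"

definition is_kernel :: "('s::finite \<Rightarrow> 'a::finite \<Rightarrow> 's \<Rightarrow> real) \<Rightarrow> bool" where
  "is_kernel P \<longleftrightarrow> (\<forall>s a. is_dist (P s a))"

definition value_fun ::
  "('s::finite \<Rightarrow> 'a::finite \<Rightarrow> 's \<Rightarrow> real) \<Rightarrow> ('s \<Rightarrow> 'a \<Rightarrow> real) \<Rightarrow> real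
     \<Rightarrow> ('s \<Rightarrow> 'a \<Rightarrow> real) \<Rightarrow> ('s \<Rightarrow> real)" where
  "value_fun P r \<gamma> \<pi> = (THE V. \<forall>s. V s =
      (\<Sum>a\<in>UNIV. \<pi> s a * (r s a + \<gamma> * (\<Sum>s'\<in>UNIV. P s a s' * V s'))))"

definition sup_norm :: "('s::finite \<Rightarrow> real) \<Rightarrow> real" where
  "sup_norm V = Max (range (\<lambda>s. \<bar>V s\<bar>))"

definition tv_dist :: "('x::finite \<Rightarrow> real) \<Rightarrow> ('x \<Rightarrow> real) \<Rightarrow> real" where
  "tv_dist f1 f2 = (1/2) * (\<Sum>x\<in>UNIV. \<bar>f1 x - f2 x\<bar>)"

definition is_distance :: "('s \<Rightarrow> 's \<Rightarrow> real) \<Rightarrow> bool" where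
  "is_distance d \<longleftrightarrow> (\<forall>x y. 0 \<le> d x y) \<and> (\<forall>x y. d x y = 0 \<longleftrightarrow> x = y)
     \<and> (\<forall>x y. d x y = d y x) \<and> (\<forall>x y z. d x z \<le> d x y + d y z)"

definition adm_set :: "('s \<Rightarrow> 's \<Rightarrow> real) \<Rightarrow> real \<Rightarrow> 's \<Rightarrow> 's set" where
  "adm_set d \<epsilon> s = {sb. d s sb \<le> \<epsilon>}"

definition alpha_pe :: "('s::finite \<Rightarrow> 'a::finite \<Rightarrow> real) \<Rightarrow> ('s \<Rightarrow> 's \<Rightarrow> real) \<Rightarrow> real \<Rightarrow> 's \<Rightarrow> real" where
  "alpha_pe \<pi> d \<epsilon> s = Max ((\<lambda>sb. tv_dist (\<pi> s) (\<pi> sb)) ` adm_set d \<epsilon> s)"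

end

theory Submission
  imports Defs "HOL-Analysis.Analysis"
begin

no_notation vec_lambda (binder \<open>\<chi>\<close> 10)

lemma sn_ge: "\<bar>V s\<bar> \<le> sup_norm V"
  unfolding sup_norm_def by (rule Max_ge) auto

lemma sn_attained: "\<exists>s. sup_norm V = \<bar>V s\<bar>"
proof -
  have "sup_norm V \<in> range (\<lambda>s. \<bar>V s\<bar>)" unfolding sup_norm_def by (rule Max_in) auto
  then show ?thesis by auto
qed

lemma sn_le: "(\<And>s. \<bar>V s\<bar> \<le> c) \<Longrightarrow> sup_norm V \<le> c"
  using sn_attained[of V] by auto

lemma avg_le:
  assumes "is_dist w"
  shows "\<bar>\<Sum>x\<in>UNIV. w x * f x\<bar> \<le> sup_norm f"
proof -
  have "\<bar>\<Sum>x\<in>UNIV. w x * f x\<bar> \<le> (\<Sum>x\<in>UNIV. \<bar>w x * f x\<bar>)" by (rule sum_abs)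
  also have "\<dots> \<le> (\<Sum>x\<in>UNIV. w x * sup_norm f)"
    apply (rule sum_mono)
    using assms sn_ge[of f] unfolding is_dist_def
    by (simp add: abs_mult mult_left_mono)
  also have "\<dots> = sup_norm f" using assms unfolding is_dist_def
    by (simp add: sum_distrib_right[symmetric])
  finally show ?thesis .
qed

lemma contr_bound:
  fixes D :: "'s::finite \<Rightarrow> real"
  assumes "\<And>s. \<bar>D s\<bar> \<le> C + \<gamma> * sup_norm D" "\<gamma> < 1"
  shows "sup_norm D \<le> C / (1 - \<gamma>)"
proof -
  have "sup_norm D \<le> C + \<gamma> * sup_norm D" using sn_attained[of D] assms(1) by metis
  then have "sup_norm D * (1 - \<gamma>) \<le> C" by (simp add: algebra_simps)
  then show ?thesis using assms(2) by (simp add: field_simps)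
qed

lemma bellman_zero:
  fixes P :: "'s::finite \<Rightarrow> 'a::finite \<Rightarrow> 's \<Rightarrow> real"
  assumes "is_kernel P" "is_policy \<mu>" "0 \<le> \<gamma>" "\<gamma> < 1"
    and "\<forall>s. D s = \<gamma> * (\<Sum>a\<in>UNIV. \<mu> s a * (\<Sum>s'\<in>UNIV. P s a s' * D s'))"
  shows "D = (\<lambda>_. 0)"
proof -
  have "\<bar>D s\<bar> \<le> 0 + \<gamma> * sup_norm D" for s
  proof -
    have "\<bar>(\<Sum>a\<in>UNIV. \<mu> s a * (\<Sum>s'\<in>UNIV. P s a s' * D s'))\<bar>
          \<le> sup_norm (\<lambda>a. \<Sum>s'\<in>UNIV. P s a s' * D s')"
      using assms(2) unfolding is_policy_def by (intro avg_le) auto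
    also have "\<dots> \<le> sup_norm D"
      using assms(1) unfolding is_kernel_def by (intro sn_le avg_le) auto
    finally have "\<bar>\<gamma> * (\<Sum>a\<in>UNIV. \<mu> s a * (\<Sum>s'\<in>UNIV. P s a s' * D s'))\<bar> \<le> \<gamma> * sup_norm D"
      using assms(3) by (simp add: abs_mult mult_left_mono)
    then show ?thesis using assms(5)[rule_format, of s] by simp
  qed
  then have "sup_norm D \<le> 0" using contr_bound[of D 0 \<gamma>] assms(4) by simp
  show ?thesis
  proof
    fix s
    have "\<bar>D s\<bar> \<le> 0" using sn_ge[of D s] \<open>sup_norm D \<le> 0\<close> by linarith
    then show "D s = 0" by simp
  qed
qed

lemma bellman_ex1:
  fixes P :: "'s::finite \<Rightarrow> 'a::finite \<Rightarrow> 's \<Rightarrow> real"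
  assumes "is_kernel P" "is_policy \<mu>" "0 \<le> \<gamma>" "\<gamma> < 1"
  shows "\<exists>!V. \<forall>s. V s = (\<Sum>a\<in>UNIV. \<mu> s a * (r s a + \<gamma> * (\<Sum>s'\<in>UNIV. P s a s' * V s')))"
proof -
  define T where "T = (\<lambda>V s. \<gamma> * (\<Sum>a\<in>UNIV. \<mu> s a * (\<Sum>s'\<in>UNIV. P s a s' * (V s' :: real))))"
  have Tadd: "T (\<lambda>s. V s + W s) s = T V s + T W s" for V W s
    unfolding T_def by (simp add: sum.distrib distrib_left)
  have Tscale: "T (\<lambda>s. c * V s) s = c * T V s" for c V s
    unfolding T_def by (simp add: sum_distrib_left mult.left_commute)
  have Tdiff: "T (\<lambda>s. V s - W s) s = T V s - T W s" for V W s
    unfolding T_def by (simp add: sum_subtractf right_diff_distrib)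
  have Tsplit: "(\<Sum>a\<in>UNIV. \<mu> s a * (r s a + \<gamma> * (\<Sum>s'\<in>UNIV. P s a s' * V s')))
      = (\<Sum>a\<in>UNIV. \<mu> s a * r s a) + T V s" for V s
    unfolding T_def by (simp add: sum.distrib sum_distrib_left algebra_simps)
  have uniq: "V = W" if "\<forall>s. V s - W s = T V s - T W s" for V W
  proof -
    have "\<forall>s. (\<lambda>s. V s - W s) s = \<gamma> * (\<Sum>a\<in>UNIV. \<mu> s a * (\<Sum>s'\<in>UNIV. P s a s' * (\<lambda>s. V s - W s) s'))"
      using that Tdiff unfolding T_def by metis
    from bellman_zero[OF assms this] show ?thesis by (simp add: fun_eq_iff)
  qed
  define f :: "real^'s \<Rightarrow> real^'s" where
    "f = (\<lambda>x. vec_lambda (\<lambda>s. x$s - T (vec_nth x) s))"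
  have fn: "f x $ s = x$s - T (vec_nth x) s" for x s unfolding f_def by simp
  have lin: "linear f"
  proof (rule linearI)
    fix x y :: "real^'s"
    have e: "vec_nth (x + y) = (\<lambda>s. x$s + y$s)" by (simp add: fun_eq_iff)
    show "f (x + y) = f x + f y"
      unfolding vec_eq_iff fn e Tadd by (simp add: fn)
  next
    fix c :: real and x :: "real^'s"
    have e: "vec_nth (c *\<^sub>R x) = (\<lambda>s. c * x$s)" by (simp add: fun_eq_iff)
    show "f (c *\<^sub>R x) = c *\<^sub>R f x"
      unfolding vec_eq_iff fn e Tscale by (simp add: fn algebra_simps)
  qed
  have "inj f"
  proof (rule injI)
    fix x y assume "f x = f y"
    then have h: "\<forall>i. x$i - T (vec_nth x) i = y$i - T (vec_nth y) i"
      by (simp add: vec_eq_iff fn)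
    have "\<forall>s. x$s - y$s = T (vec_nth x) s - T (vec_nth y) s"
    proof
      fix s show "x$s - y$s = T (vec_nth x) s - T (vec_nth y) s" using h[rule_format, of s] by linarith
    qed
    then have "vec_nth x = vec_nth y" by (rule uniq)
    then show "x = y" by (simp add: vec_eq_iff fun_eq_iff)
  qed
  then have "surj f" using lin linear_injective_imp_surjective by blast
  then obtain x where x: "f x = vec_lambda (\<lambda>s. \<Sum>a\<in>UNIV. \<mu> s a * r s a)"
    unfolding surj_def by (metis (no_types, lifting))
  define V0 where "V0 = vec_nth x"
  have ex: "\<forall>s. V0 s = (\<Sum>a\<in>UNIV. \<mu> s a * (r s a + \<gamma> * (\<Sum>s'\<in>UNIV. P s a s' * V0 s')))"
  proof
    fix s
    have "V0 s - T V0 s = (\<Sum>a\<in>UNIV. \<mu> s a * r s a)"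
      using arg_cong[OF x, of "\<lambda>v. v$s"] unfolding V0_def by (simp add: fn)
    then show "V0 s = (\<Sum>a\<in>UNIV. \<mu> s a * (r s a + \<gamma> * (\<Sum>s'\<in>UNIV. P s a s' * V0 s')))"
      unfolding Tsplit by simp
  qed
  show ?thesis
  proof (rule ex1I[of _ V0])
    show "\<forall>s. V0 s = (\<Sum>a\<in>UNIV. \<mu> s a * (r s a + \<gamma> * (\<Sum>s'\<in>UNIV. P s a s' * V0 s')))"
      by (rule ex)
  next
    fix V assume V: "\<forall>s. V s = (\<Sum>a\<in>UNIV. \<mu> s a * (r s a + \<gamma> * (\<Sum>s'\<in>UNIV. P s a s' * V s')))"
    have "\<forall>s. V s - V0 s = T V s - T V0 s"
    proof
      fix s
      have "V s = (\<Sum>a\<in>UNIV. \<mu> s a * r s a) + T V s" using V[rule_format, of s] unfolding Tsplit .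
      moreover have "V0 s = (\<Sum>a\<in>UNIV. \<mu> s a * r s a) + T V0 s" using ex[rule_format, of s] unfolding Tsplit .
      ultimately show "V s - V0 s = T V s - T V0 s" by linarith
    qed
    then show "V = V0" by (rule uniq)
  qed
qed

lemma value_eq:
  fixes P :: "'s::finite \<Rightarrow> 'a::finite \<Rightarrow> 's \<Rightarrow> real"
  assumes "is_kernel P" "is_policy \<mu>" "0 \<le> \<gamma>" "\<gamma> < 1"
  shows "value_fun P r \<gamma> \<mu> s = (\<Sum>a\<in>UNIV. \<mu> s a * (r s a + \<gamma> * (\<Sum>s'\<in>UNIV. P s a s' * value_fun P r \<gamma> \<mu> s')))"
  using theI'[OF bellman_ex1[OF assms, of r]] unfolding value_fun_def by blast


lemma policy_comp: "is_policy \<pi> \<Longrightarrow> is_policy (\<lambda>s. \<pi> (\<chi> s))"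
  unfolding is_policy_def by simp

theorem proposition5p1:
  fixes P :: "'s::finite \<Rightarrow> 'a::finite \<Rightarrow> 's \<Rightarrow> real"
    and r :: "'s \<Rightarrow> 'a \<Rightarrow> real"
    and \<pi> :: "'s \<Rightarrow> 'a \<Rightarrow> real"
    and d :: "'s \<Rightarrow> 's \<Rightarrow> real"
    and \<chi> :: "'s \<Rightarrow> 's"
    and R \<gamma> \<epsilon> :: real
  assumes "is_kernel P"
    and "\<forall>s a. \<bar>r s a\<bar> \<le> R"
    and "0 < \<gamma>" and "\<gamma> < 1"
    and "is_distance d"
    and "0 \<le> \<epsilon>"
    and "is_policy \<pi>"
    and "\<forall>s. \<chi> s \<in> adm_set d \<epsilon> s"
  shows "sup_norm (\<lambda>s. value_fun P r \<gamma> \<pi> s - value_fun P r \<gamma> (\<lambda>s. \<pi> (\<chi> s)) s)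
           \<le> 2 * sup_norm (alpha_pe \<pi> d \<epsilon>) / (1 - \<gamma>) * (R + \<gamma> * sup_norm (value_fun P r \<gamma> \<pi>))
    \<and> (\<forall>L. 0 \<le> L \<longrightarrow> (\<forall>s s'. tv_dist (\<pi> s) (\<pi> s') \<le> L * d s s') \<longrightarrow>
         sup_norm (\<lambda>s. value_fun P r \<gamma> \<pi> s - value_fun P r \<gamma> (\<lambda>s. \<pi> (\<chi> s)) s)
           \<le> 2 * L * \<epsilon> / (1 - \<gamma>) * (R + \<gamma> * sup_norm (value_fun P r \<gamma> \<pi>)))"
proof -
  define V where "V = value_fun P r \<gamma> \<pi>"
  define W where "W = value_fun P r \<gamma> (\<lambda>s. \<pi> (\<chi> s))"
  define D where "D = (\<lambda>s. V s - W s)"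
  define Q where "Q = (\<lambda>s a. r s a + \<gamma> * (\<Sum>s'\<in>UNIV. P s a s' * V s'))"
  define K where "K = R + \<gamma> * sup_norm V"
  define A where "A = sup_norm (alpha_pe \<pi> d \<epsilon>)"
  have g0: "0 \<le> \<gamma>" using assms(3) by simp
  have pc: "is_policy (\<lambda>s. \<pi> (\<chi> s))" using policy_comp[OF assms(7)] .
  have Veq: "V s = (\<Sum>a\<in>UNIV. \<pi> s a * Q s a)" for s
    unfolding V_def Q_def by (rule value_eq[OF assms(1,7) g0 assms(4)])
  have Weq: "W s = (\<Sum>a\<in>UNIV. \<pi> (\<chi> s) a * (r s a + \<gamma> * (\<Sum>s'\<in>UNIV. P s a s' * W s')))" for s
    unfolding W_def by (rule value_eq[OF assms(1) pc g0 assms(4)])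
  have R0: "0 \<le> R" using assms(2) by (meson abs_ge_zero order_trans)
  have K0: "0 \<le> K" unfolding K_def using R0 g0 sn_ge[of V] by (meson abs_ge_zero order_trans mult_nonneg_nonneg add_nonneg_nonneg)
  have Qb: "\<bar>Q s a\<bar> \<le> K" for s a
  proof -
    have "\<bar>\<Sum>s'\<in>UNIV. P s a s' * V s'\<bar> \<le> sup_norm V"
      using assms(1) unfolding is_kernel_def by (intro avg_le) auto
    then have "\<bar>\<gamma> * (\<Sum>s'\<in>UNIV. P s a s' * V s')\<bar> \<le> \<gamma> * sup_norm V"
      using g0 by (simp add: abs_mult mult_left_mono)
    moreover have "\<bar>r s a\<bar> \<le> R" using assms(2) by blast
    ultimately show ?thesis unfolding Q_def K_def
      using abs_triangle_ineq[of "r s a" "\<gamma> * (\<Sum>s'\<in>UNIV. P s a s' * V s')"] by linarith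
  qed
  have Dsplit: "D s = (\<Sum>a\<in>UNIV. (\<pi> s a - \<pi> (\<chi> s) a) * Q s a)
      + \<gamma> * (\<Sum>a\<in>UNIV. \<pi> (\<chi> s) a * (\<Sum>s'\<in>UNIV. P s a s' * D s'))" for s
  proof -
    have "W s = (\<Sum>a\<in>UNIV. \<pi> (\<chi> s) a * Q s a) - \<gamma> * (\<Sum>a\<in>UNIV. \<pi> (\<chi> s) a * (\<Sum>s'\<in>UNIV. P s a s' * D s'))"
      unfolding Weq[of s] Q_def D_def
      by (simp add: algebra_simps sum_subtractf sum_distrib_left sum.distrib)
    then show ?thesis unfolding D_def Veq[of s]
      by (simp add: algebra_simps sum_subtractf)
  qed
  have alpha_ge: "tv_dist (\<pi> s) (\<pi> sb) \<le> alpha_pe \<pi> d \<epsilon> s" if "sb \<in> adm_set d \<epsilon> s" for s sb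
    unfolding alpha_pe_def using that by (intro Max_ge) auto
  have tv0: "0 \<le> tv_dist f g" for f g :: "'a \<Rightarrow> real"
    unfolding tv_dist_def by (simp add: sum_nonneg)
  have Db: "\<bar>D s\<bar> \<le> 2 * A * K + \<gamma> * sup_norm D" for s
  proof -
    have "\<bar>\<Sum>a\<in>UNIV. (\<pi> s a - \<pi> (\<chi> s) a) * Q s a\<bar> \<le> (\<Sum>a\<in>UNIV. \<bar>(\<pi> s a - \<pi> (\<chi> s) a) * Q s a\<bar>)"
      by (rule sum_abs)
    also have "\<dots> \<le> (\<Sum>a\<in>UNIV. \<bar>\<pi> s a - \<pi> (\<chi> s) a\<bar> * K)"
      by (rule sum_mono) (simp add: abs_mult Qb mult_left_mono)
    also have "\<dots> = 2 * tv_dist (\<pi> s) (\<pi> (\<chi> s)) * K"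
      unfolding tv_dist_def by (simp add: sum_distrib_right)
    also have "\<dots> \<le> 2 * A * K"
    proof -
      have "tv_dist (\<pi> s) (\<pi> (\<chi> s)) \<le> alpha_pe \<pi> d \<epsilon> s" using alpha_ge assms(8) by blast
      also have "\<dots> \<le> A" unfolding A_def using sn_ge[of "alpha_pe \<pi> d \<epsilon>" s] by simp
      finally show ?thesis using K0 by (simp add: mult_right_mono)
    qed
    finally have t1: "\<bar>\<Sum>a\<in>UNIV. (\<pi> s a - \<pi> (\<chi> s) a) * Q s a\<bar> \<le> 2 * A * K" .
    have "\<bar>(\<Sum>a\<in>UNIV. \<pi> (\<chi> s) a * (\<Sum>s'\<in>UNIV. P s a s' * D s'))\<bar>
          \<le> sup_norm (\<lambda>a. \<Sum>s'\<in>UNIV. P s a s' * D s')"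
      using pc unfolding is_policy_def by (intro avg_le) auto
    also have "\<dots> \<le> sup_norm D"
      using assms(1) unfolding is_kernel_def by (intro sn_le avg_le) auto
    finally have t2: "\<bar>\<gamma> * (\<Sum>a\<in>UNIV. \<pi> (\<chi> s) a * (\<Sum>s'\<in>UNIV. P s a s' * D s'))\<bar> \<le> \<gamma> * sup_norm D"
      using g0 by (simp add: abs_mult mult_left_mono)
    show ?thesis unfolding Dsplit[of s] using t1 t2 by linarith
  qed
  have main: "sup_norm D \<le> 2 * A / (1 - \<gamma>) * K"
    using contr_bound[of D "2 * A * K" \<gamma>, OF Db assms(4)] by simp
  have second: "sup_norm D \<le> 2 * L * \<epsilon> / (1 - \<gamma>) * K"
    if L0: "0 \<le> L" and Lip: "\<forall>s s'. tv_dist (\<pi> s) (\<pi> s') \<le> L * d s s'" for L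
  proof -
    have "\<bar>alpha_pe \<pi> d \<epsilon> s\<bar> \<le> L * \<epsilon>" for s
    proof -
      have "d s s = 0" using assms(5) unfolding is_distance_def by blast
      then have sin: "s \<in> adm_set d \<epsilon> s" using assms(6) unfolding adm_set_def by simp
      have "alpha_pe \<pi> d \<epsilon> s \<le> L * \<epsilon>" unfolding alpha_pe_def
      proof (rule Max.boundedI)
        show "finite ((\<lambda>sb. tv_dist (\<pi> s) (\<pi> sb)) ` adm_set d \<epsilon> s)" by simp
        show "(\<lambda>sb. tv_dist (\<pi> s) (\<pi> sb)) ` adm_set d \<epsilon> s \<noteq> {}" using sin by blast
        fix x assume "x \<in> (\<lambda>sb. tv_dist (\<pi> s) (\<pi> sb)) ` adm_set d \<epsilon> s"
        then obtain sb where "d s sb \<le> \<epsilon>" "x = tv_dist (\<pi> s) (\<pi> sb)" unfolding adm_set_def by auto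
        then show "x \<le> L * \<epsilon>" using Lip L0 by (meson mult_left_mono order_trans)
      qed
      moreover have "0 \<le> alpha_pe \<pi> d \<epsilon> s" using alpha_ge[OF sin] tv0 by (meson order_trans)
      ultimately show ?thesis by simp
    qed
    then have "A \<le> L * \<epsilon>" unfolding A_def by (rule sn_le)
    then have "2 * A / (1 - \<gamma>) * K \<le> 2 * (L * \<epsilon>) / (1 - \<gamma>) * K"
      using assms(4) K0 by (intro mult_right_mono divide_right_mono) auto
    then show ?thesis using main by (simp add: mult.assoc)
  qed
  show ?thesis using main second unfolding D_def V_def W_def K_def A_def by blast
qed

end
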